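(* Let $\epsilon\in\{0,\frac12\}$. Every local automorphism of $\mathrm{SVir}[\epsilon]$ is an automorphism of $\mathrm{SVir}[\epsilon]$.
   Context: For $\epsilon\in\{0,\frac12\}$, the super Virasoro algebra $\mathrm{SVir}[\epsilon]$ is the Lie superalgebra over $\mathbb{C}$ with basis $\{L_m, G_r, C : m\in\mathbb{Z}, r\in\mathbb{Z}+\epsilon\}$, even part spanned by the $L_m$ and $C$, odd part spanned by the $G_r$, and brackets $[L_m,L_n]=(m-n)L_{m+n}+\frac{1}{12}\delta_{m+n,0}(m^3-m)C$, $[L_m,G_r]=(\frac m2-r)G_{m+r}$, $[G_r,G_s]=2L_{r+s}+\frac13\delta_{r+s,0}(r^2-\frac14)C$, with $C$ central. An automorphism is an even bijective linear map preserving the bracket. A linear map $\phi:L\to L$ is a local automorphism if for every $x\in L$ there is an automorphism $\theta_x$ of $L$ with $\phi(x)=\theta_x(x)$. *)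

theory Defs
  imports Complex_Main
begin

text \<open>An element of SVir[eps] is represented by its coordinates in the basis
  L_m (m integer), G_r (r in Z + eps, r stored as a real number), C:
  a triple (a, b, c) with a m the coefficient of L_m, b r that of G_r, c that of C.\<close>

type_synonym svel = "(int \<Rightarrow> complex) \<times> (real \<Rightarrow> complex) \<times> complex"

definition Lco :: "svel \<Rightarrow> int \<Rightarrow> complex" where "Lco x = fst x"
definition Gco :: "svel \<Rightarrow> real \<Rightarrow> complex" where "Gco x = fst (snd x)"
definition Cco :: "svel \<Rightarrow> complex" where "Cco x = snd (snd x)"

definition SVir :: "real \<Rightarrow> svel set" where
  "SVir eps = {x. finite {m. Lco x m \<noteq> 0} \<and> finite {r. Gco x r \<noteq> 0}
                  \<and> (\<forall>r. Gco x r \<noteq> 0 \<longrightarrow> r - eps \<in> \<int>)}"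

definition sv_add :: "svel \<Rightarrow> svel \<Rightarrow> svel" where
  "sv_add x y = ((\<lambda>m. Lco x m + Lco y m), (\<lambda>r. Gco x r + Gco y r), Cco x + Cco y)"

definition sv_scale :: "complex \<Rightarrow> svel \<Rightarrow> svel" where
  "sv_scale k x = ((\<lambda>m. k * Lco x m), (\<lambda>r. k * Gco x r), k * Cco x)"

text \<open>The super bracket, i.e. the bilinear extension of
  [L_m,L_n] = (m-n)L_{m+n} + delta_{m+n,0}(m^3-m)/12 C,
  [L_m,G_r] = (m/2-r)G_{m+r}, [G_r,L_m] = -(m/2-r)G_{m+r},
  [G_r,G_s] = 2L_{r+s} + delta_{r+s,0}(r^2-1/4)/3 C, C central.\<close>

definition sv_bracket :: "svel \<Rightarrow> svel \<Rightarrow> svel" where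
  "sv_bracket x y =
    ((\<lambda>n. (\<Sum>m\<in>{m. Lco x m \<noteq> 0}. Lco x m * Lco y (n - m) * of_int (m - (n - m)))
         + (\<Sum>r\<in>{r. Gco x r \<noteq> 0}. 2 * Gco x r * Gco y (of_int n - r))),
     (\<lambda>t. (\<Sum>m\<in>{m. Lco x m \<noteq> 0}. Lco x m * Gco y (t - of_int m)
                                        * complex_of_real (of_int m / 2 - (t - of_int m)))
         - (\<Sum>n\<in>{n. Lco y n \<noteq> 0}. Lco y n * Gco x (t - of_int n)
                                        * complex_of_real (of_int n / 2 - (t - of_int n)))),
     (\<Sum>m\<in>{m. Lco x m \<noteq> 0}. Lco x m * Lco y (- m) * of_int (m ^ 3 - m) / 12)
     + (\<Sum>r\<in>{r. Gco x r \<noteq> 0}. Gco x r * Gco y (- r) * complex_of_real ((r ^ 2 - 1 / 4) / 3)))"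

definition sv_linear :: "real \<Rightarrow> (svel \<Rightarrow> svel) \<Rightarrow> bool" where
  "sv_linear eps f \<longleftrightarrow> (\<forall>x\<in>SVir eps. f x \<in> SVir eps)
     \<and> (\<forall>x\<in>SVir eps. \<forall>y\<in>SVir eps. f (sv_add x y) = sv_add (f x) (f y))
     \<and> (\<forall>k. \<forall>x\<in>SVir eps. f (sv_scale k x) = sv_scale k (f x))"

definition sv_even :: "real \<Rightarrow> svel set" where
  "sv_even eps = {x\<in>SVir eps. \<forall>r. Gco x r = 0}"
definition sv_odd :: "real \<Rightarrow> svel set" where
  "sv_odd eps = {x\<in>SVir eps. (\<forall>m. Lco x m = 0) \<and> Cco x = 0}"

definition sv_aut :: "real \<Rightarrow> (svel \<Rightarrow> svel) \<Rightarrow> bool" where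
  "sv_aut eps f \<longleftrightarrow> sv_linear eps f \<and> bij_betw f (SVir eps) (SVir eps)
     \<and> f ` sv_even eps \<subseteq> sv_even eps \<and> f ` sv_odd eps \<subseteq> sv_odd eps
     \<and> (\<forall>x\<in>SVir eps. \<forall>y\<in>SVir eps. f (sv_bracket x y) = sv_bracket (f x) (f y))"

definition sv_local_aut :: "real \<Rightarrow> (svel \<Rightarrow> svel) \<Rightarrow> bool" where
  "sv_local_aut eps f \<longleftrightarrow> sv_linear eps f
     \<and> (\<forall>x\<in>SVir eps. \<exists>\<theta>. sv_aut eps \<theta> \<and> f x = \<theta> x)"

end

theory Submission
  imports Defs
begin

definition Zr :: svel where "Zr = ((\<lambda>_. 0), (\<lambda>_. 0), 0)"
definition Lb :: "int \<Rightarrow> svel" where "Lb m = ((\<lambda>n. if n = m then 1 else 0), (\<lambda>_. 0), 0)"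
definition Gb :: "real \<Rightarrow> svel" where "Gb r = ((\<lambda>_. 0), (\<lambda>t. if t = r then 1 else 0), 0)"
definition Cb :: svel where "Cb = ((\<lambda>_. 0), (\<lambda>_. 0), 1)"

lemma co_simps[simp]:
  "Lco (sv_add x y) m = Lco x m + Lco y m" "Gco (sv_add x y) r = Gco x r + Gco y r"
  "Cco (sv_add x y) = Cco x + Cco y"
  "Lco (sv_scale k x) m = k * Lco x m" "Gco (sv_scale k x) r = k * Gco x r"
  "Cco (sv_scale k x) = k * Cco x"
  "Lco Zr m = 0" "Gco Zr r = 0" "Cco Zr = 0"
  "Lco (Lb j) m = (if m = j then 1 else 0)" "Gco (Lb j) r = 0" "Cco (Lb j) = 0"
  "Lco (Gb s) m = 0" "Gco (Gb s) r = (if r = s then 1 else 0)" "Cco (Gb s) = 0"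
  "Lco Cb m = 0" "Gco Cb r = 0" "Cco Cb = 1"
  "Lco (a,b,c) = a" "Gco (a,b,c) = b" "Cco (a,b,c) = c"
  by (auto simp: sv_add_def sv_scale_def Lco_def Gco_def Cco_def Zr_def Lb_def Gb_def Cb_def)

lemma sv_eqI: "(\<And>m. Lco x m = Lco y m) \<Longrightarrow> (\<And>r. Gco x r = Gco y r) \<Longrightarrow> Cco x = Cco y \<Longrightarrow> x = y"
  unfolding Lco_def Gco_def Cco_def by (simp add: prod_eq_iff fun_eq_iff)

lemma sv_eq_iff: "x = y \<longleftrightarrow> (\<forall>m. Lco x m = Lco y m) \<and> (\<forall>r. Gco x r = Gco y r) \<and> Cco x = Cco y"
  by (auto intro: sv_eqI)

lemma SVirI: "finite {m. Lco x m \<noteq> 0} \<Longrightarrow> finite {r. Gco x r \<noteq> 0} \<Longrightarrow> (\<And>r. Gco x r \<noteq> 0 \<Longrightarrow> r - eps \<in> \<int>) \<Longrightarrow> x \<in> SVir eps"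
  unfolding SVir_def by auto

lemma SVirD: assumes "x \<in> SVir eps" shows "finite {m. Lco x m \<noteq> 0}" "finite {r. Gco x r \<noteq> 0}" "Gco x r \<noteq> 0 \<Longrightarrow> r - eps \<in> \<int>"
  using assms unfolding SVir_def by auto

lemma Zr_SVir[simp]: "Zr \<in> SVir eps" by (rule SVirI) auto
lemma Lb_SVir[simp]: "Lb m \<in> SVir eps" by (rule SVirI) auto
lemma Cb_SVir[simp]: "Cb \<in> SVir eps" by (rule SVirI) auto
lemma Gb_SVir[simp]: "r - eps \<in> \<int> \<Longrightarrow> Gb r \<in> SVir eps" by (rule SVirI) (auto split: if_splits)

lemma add_SVir[simp]: "x \<in> SVir eps \<Longrightarrow> y \<in> SVir eps \<Longrightarrow> sv_add x y \<in> SVir eps"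
proof (rule SVirI)
  assume x: "x \<in> SVir eps" and y: "y \<in> SVir eps"
  show "finite {m. Lco (sv_add x y) m \<noteq> 0}"
    by (rule finite_subset[of _ "{m. Lco x m \<noteq> 0} \<union> {m. Lco y m \<noteq> 0}"]) (use SVirD[OF x] SVirD[OF y] in auto)
  show "finite {m. Gco (sv_add x y) m \<noteq> 0}"
    by (rule finite_subset[of _ "{m. Gco x m \<noteq> 0} \<union> {m. Gco y m \<noteq> 0}"]) (use SVirD[OF x] SVirD[OF y] in auto)
  fix r assume "Gco (sv_add x y) r \<noteq> 0"
  then show "r - eps \<in> \<int>" using SVirD(3)[OF x] SVirD(3)[OF y] by (cases "Gco x r = 0") auto
qed

lemma scale_SVir[simp]: "x \<in> SVir eps \<Longrightarrow> sv_scale k x \<in> SVir eps"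
proof (rule SVirI)
  assume x: "x \<in> SVir eps"
  show "finite {m. Lco (sv_scale k x) m \<noteq> 0}"
    by (rule finite_subset[of _ "{m. Lco x m \<noteq> 0}"]) (use SVirD[OF x] in auto)
  show "finite {m. Gco (sv_scale k x) m \<noteq> 0}"
    by (rule finite_subset[of _ "{m. Gco x m \<noteq> 0}"]) (use SVirD[OF x] in auto)
  fix r assume "Gco (sv_scale k x) r \<noteq> 0"
  then show "r - eps \<in> \<int>" using SVirD(3)[OF x] by auto
qed


definition Bas :: "real \<Rightarrow> svel set" where
  "Bas eps = range Lb \<union> Gb ` {r. r - eps \<in> \<int>} \<union> {Cb}"

lemma Bas_SVir: "b \<in> Bas eps \<Longrightarrow> b \<in> SVir eps" unfolding Bas_def by auto

definition msr :: "svel \<Rightarrow> nat" where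
  "msr y = card {m. Lco y m \<noteq> 0} + card {r. Gco y r \<noteq> 0} + (if Cco y = 0 then 0 else 1)"

lemma sv_induct:
  assumes y: "y \<in> SVir eps" and z: "P Zr"
    and step: "\<And>x b k. x \<in> SVir eps \<Longrightarrow> b \<in> Bas eps \<Longrightarrow> P x \<Longrightarrow> P (sv_add (sv_scale k b) x)"
  shows "P y"
  using y
proof (induction "msr y" arbitrary: y rule: less_induct)
  case less
  note yS = SVirD[OF less.prems]
  show ?case
  proof (cases "\<exists>m. Lco y m \<noteq> 0")
    case True
    then obtain m where m: "Lco y m \<noteq> 0" by auto
    define x where "x = ((\<lambda>n. if n = m then 0 else Lco y n), Gco y, Cco y)"
    have xS: "x \<in> SVir eps"
      by (rule SVirI) (use yS in \<open>auto simp: x_def elim: finite_subset[rotated]\<close>)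
    have "{n. Lco x n \<noteq> 0} = {n. Lco y n \<noteq> 0} - {m}" by (auto simp: x_def)
    moreover have "card ({n. Lco y n \<noteq> 0} - {m}) < card {n. Lco y n \<noteq> 0}"
      by (rule card_Diff1_less) (use m yS in auto)
    ultimately have "card {n. Lco x n \<noteq> 0} < card {n. Lco y n \<noteq> 0}" by simp
    then have "msr x < msr y" unfolding msr_def by (simp add: x_def)
    then have Px: "P x" using less xS by blast
    have e: "y = sv_add (sv_scale (Lco y m) (Lb m)) x" by (rule sv_eqI) (auto simp: x_def)
    have "P (sv_add (sv_scale (Lco y m) (Lb m)) x)" by (rule step[OF xS _ Px]) (simp add: Bas_def)
    then show ?thesis using e by simp
  next
    case False
    note F1 = this
    show ?thesis
    proof (cases "\<exists>r. Gco y r \<noteq> 0")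
      case True
      then obtain r where r: "Gco y r \<noteq> 0" by auto
      define x where "x = (Lco y, (\<lambda>t. if t = r then 0 else Gco y t), Cco y)"
      have xS: "x \<in> SVir eps"
        by (rule SVirI) (use yS in \<open>auto simp: x_def elim: finite_subset[rotated] split: if_splits\<close>)
      have "{n. Gco x n \<noteq> 0} = {n. Gco y n \<noteq> 0} - {r}" by (auto simp: x_def)
      moreover have "card ({n. Gco y n \<noteq> 0} - {r}) < card {n. Gco y n \<noteq> 0}"
        by (rule card_Diff1_less) (use r yS in auto)
      ultimately have "card {n. Gco x n \<noteq> 0} < card {n. Gco y n \<noteq> 0}" by simp
      then have "msr x < msr y" unfolding msr_def by (simp add: x_def)
      then have Px: "P x" using less xS by blast
      have "y = sv_add (sv_scale (Gco y r) (Gb r)) x" by (rule sv_eqI) (auto simp: x_def)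
      moreover have "Gb r \<in> Bas eps" using yS(3)[OF r] by (simp add: Bas_def)
      ultimately show ?thesis using step[OF xS _ Px, of "Gb r" "Gco y r"] by metis
    next
      case False
      show ?thesis
      proof (cases "Cco y = 0")
        case True
        then have "y = Zr" using F1 False by (auto intro: sv_eqI)
        then show ?thesis using z by simp
      next
        case c: False
        define x where "x = (Lco y, Gco y, 0::complex)"
        have xS: "x \<in> SVir eps"
          by (rule SVirI) (use yS in \<open>auto simp: x_def\<close>)
        have "msr x < msr y" unfolding msr_def using c by (simp add: x_def)
        then have Px: "P x" using less xS by blast
        have "y = sv_add (sv_scale (Cco y) Cb) x" by (rule sv_eqI) (auto simp: x_def)
        moreover have "Cb \<in> Bas eps" by (simp add: Bas_def)
        ultimately show ?thesis using step[OF xS _ Px, of "Cb" "Cco y"] by metis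
      qed
    qed
  qed
qed

lemma lin_SVir: "sv_linear eps f \<Longrightarrow> x \<in> SVir eps \<Longrightarrow> f x \<in> SVir eps"
  unfolding sv_linear_def by auto
lemma lin_add: "sv_linear eps f \<Longrightarrow> x \<in> SVir eps \<Longrightarrow> y \<in> SVir eps \<Longrightarrow> f (sv_add x y) = sv_add (f x) (f y)"
  unfolding sv_linear_def by auto
lemma lin_scale: "sv_linear eps f \<Longrightarrow> x \<in> SVir eps \<Longrightarrow> f (sv_scale k x) = sv_scale k (f x)"
  unfolding sv_linear_def by auto
lemma scale0: "sv_scale 0 x = Zr" by (rule sv_eqI) auto
lemma lin_Zr: "sv_linear eps f \<Longrightarrow> f Zr = Zr"
  using lin_scale[of eps f Zr 0] by (simp add: scale0)

lemma lin_induct: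
  assumes f: "sv_linear eps f" and y: "y \<in> SVir eps" and z: "P Zr"
    and add: "\<And>u v. P u \<Longrightarrow> P v \<Longrightarrow> P (sv_add u v)" and sc: "\<And>u k. P u \<Longrightarrow> P (sv_scale k u)"
    and bas: "\<And>b. b \<in> Bas eps \<Longrightarrow> P (f b)"
  shows "P (f y)"
proof (rule sv_induct[OF y])
  show "P (f Zr)" using z lin_Zr[OF f] by simp
next
  fix x b k assume 2: "x \<in> SVir eps" "b \<in> Bas eps" "P (f x)"
  have "f (sv_add (sv_scale k b) x) = sv_add (sv_scale k (f b)) (f x)"
    using f 2 Bas_SVir by (simp add: lin_add lin_scale)
  then show "P (f (sv_add (sv_scale k b) x))" using add sc bas 2 by simp
qed


lemma br_L: "Lco (sv_bracket x y) n = (\<Sum>m\<in>{m. Lco x m \<noteq> 0}. Lco x m * Lco y (n - m) * of_int (m - (n - m)))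
         + (\<Sum>r\<in>{r. Gco x r \<noteq> 0}. 2 * Gco x r * Gco y (of_int n - r))"
  by (simp add: sv_bracket_def)
lemma br_G: "Gco (sv_bracket x y) t = (\<Sum>m\<in>{m. Lco x m \<noteq> 0}. Lco x m * Gco y (t - of_int m)
                                        * complex_of_real (of_int m / 2 - (t - of_int m)))
         - (\<Sum>n\<in>{n. Lco y n \<noteq> 0}. Lco y n * Gco x (t - of_int n)
                                        * complex_of_real (of_int n / 2 - (t - of_int n)))"
  by (simp add: sv_bracket_def)
lemma br_C: "Cco (sv_bracket x y) = (\<Sum>m\<in>{m. Lco x m \<noteq> 0}. Lco x m * Lco y (- m) * of_int (m ^ 3 - m) / 12)
     + (\<Sum>r\<in>{r. Gco x r \<noteq> 0}. Gco x r * Gco y (- r) * complex_of_real ((r ^ 2 - 1 / 4) / 3))"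
  by (simp add: sv_bracket_def)

lemma sum_supp1:
  fixes a :: "'a \<Rightarrow> complex"
  assumes "{m. a m \<noteq> 0} \<subseteq> {j}"
  shows "(\<Sum>m\<in>{m. a m \<noteq> 0}. a m * g m) = a j * g j"
proof (cases "a j = 0")
  case True
  then have "{m. a m \<noteq> 0} = {}" using assms by auto
  then show ?thesis using True by simp
next
  case False
  then have "{m. a m \<noteq> 0} = {j}" using assms by auto
  then show ?thesis by simp
qed

lemma sum_supp1':
  fixes a :: "'a \<Rightarrow> complex"
  assumes "{m. a m \<noteq> 0} \<subseteq> {j}"
  shows "(\<Sum>m\<in>{m. a m \<noteq> 0}. a m * g m / c) = a j * g j / c"
  using sum_supp1[OF assms, of "\<lambda>m. g m / c"] by (simp add: mult.assoc)

lemma G0_empty: "(\<forall>r. Gco x r = 0) \<Longrightarrow> {r. Gco x r \<noteq> 0} = {}" by auto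

lemma br_diag:
  assumes G: "\<forall>r. Gco h r = 0" and L: "{m. Lco h m \<noteq> 0} \<subseteq> {0}"
  shows "sv_bracket h v = ((\<lambda>n. - Lco h 0 * of_int n * Lco v n), (\<lambda>t. - Lco h 0 * complex_of_real t * Gco v t), 0)"
proof (rule sv_eqI)
  fix n
  have "Lco (sv_bracket h v) n = (\<Sum>m\<in>{m. Lco h m \<noteq> 0}. Lco h m * (Lco v (n - m) * of_int (m - (n - m))))"
    unfolding br_L using G0_empty[OF G] by (simp add: mult.assoc)
  also have "\<dots> = Lco h 0 * (Lco v n * of_int (- n))" by (subst sum_supp1[OF L]) simp
  finally show "Lco (sv_bracket h v) n = Lco ((\<lambda>n. - Lco h 0 * of_int n * Lco v n), (\<lambda>t. - Lco h 0 * complex_of_real t * Gco v t), 0) n"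
    by simp
next
  fix t
  have "Gco (sv_bracket h v) t = (\<Sum>m\<in>{m. Lco h m \<noteq> 0}. Lco h m * (Gco v (t - of_int m)
                                        * complex_of_real (of_int m / 2 - (t - of_int m))))"
    unfolding br_G using G by (simp add: mult.assoc)
  also have "\<dots> = Lco h 0 * (Gco v t * complex_of_real (- t))" by (subst sum_supp1[OF L]) simp
  finally show "Gco (sv_bracket h v) t = Gco ((\<lambda>n. - Lco h 0 * of_int n * Lco v n), (\<lambda>t. - Lco h 0 * complex_of_real t * Gco v t), 0) t"
    by simp
next
  have "Cco (sv_bracket h v) = (\<Sum>m\<in>{m. Lco h m \<noteq> 0}. Lco h m * (Lco v (- m) * of_int (m ^ 3 - m) / 12))"
    unfolding br_C using G0_empty[OF G] by (simp add: mult.assoc)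
  also have "\<dots> = 0" by (subst sum_supp1[OF L]) simp
  finally show "Cco (sv_bracket h v) = Cco ((\<lambda>n. - Lco h 0 * of_int n * Lco v n), (\<lambda>t. - Lco h 0 * complex_of_real t * Gco v t), 0)"
    by simp
qed

lemma br_L0: "sv_bracket (Lb 0) v = ((\<lambda>n. - of_int n * Lco v n), (\<lambda>t. - complex_of_real t * Gco v t), 0)"
  using br_diag[of "Lb 0" v] by auto

lemma br_Cb: "sv_bracket Cb v = Zr"
  using br_diag[of Cb v] by (auto intro: sv_eqI)

lemma br_L0_Lb: "sv_bracket (Lb 0) (Lb m) = sv_scale (- of_int m) (Lb m)"
  by (rule sv_eqI) (auto simp: br_L0)
lemma br_L0_Gb: "sv_bracket (Lb 0) (Gb r) = sv_scale (- complex_of_real r) (Gb r)"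
  by (rule sv_eqI) (auto simp: br_L0)
lemma br_L0_Cb: "sv_bracket (Lb 0) Cb = sv_scale 0 Cb"
  by (rule sv_eqI) (auto simp: br_L0)

lemma br_L1_Lm1: "sv_bracket (Lb 1) (Lb (-1)) = sv_scale 2 (Lb 0)"
proof (rule sv_eqI)
  have s: "{m. Lco (Lb 1) m \<noteq> 0} = {1}" by auto
  fix n show "Lco (sv_bracket (Lb 1) (Lb (-1))) n = Lco (sv_scale 2 (Lb 0)) n"
    unfolding br_L s by simp
next
  fix t show "Gco (sv_bracket (Lb 1) (Lb (-1))) t = Gco (sv_scale 2 (Lb 0)) t"
    unfolding br_G by simp
next
  have s: "{m. Lco (Lb 1) m \<noteq> 0} = {1}" by auto
  show "Cco (sv_bracket (Lb 1) (Lb (-1))) = Cco (sv_scale 2 (Lb 0))"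
    unfolding br_C s by simp
qed


lemma top_bound:
  assumes G: "\<forall>r. Gco h r = 0" and fh: "finite {m. Lco h m \<noteq> 0}"
    and ne: "{m. Lco h m \<noteq> 0} \<noteq> {}" and M: "M = Max {m. Lco h m \<noteq> 0}" "M > 0"
    and eig: "sv_bracket h v = sv_scale lam v" and fv: "finite {m. Lco v m \<noteq> 0}" and N: "N > M"
  shows "Lco v N = 0"
proof (rule ccontr)
  assume vN: "Lco v N \<noteq> 0"
  define S where "S = {m. Lco v m \<noteq> 0}"
  define N' where "N' = Max S"
  have "N \<in> S" using vN by (simp add: S_def)
  moreover have fS: "finite S" using fv by (simp add: S_def)
  ultimately have NN: "N \<le> N'" "N' \<in> S" unfolding N'_def by (metis Max_in Max_ge empty_iff)+
  have up: "\<And>j. j > N' \<Longrightarrow> Lco v j = 0"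
    using fv unfolding N'_def S_def by (metis (mono_tags) Max_ge mem_Collect_eq not_le)
  have hM: "Lco h M \<noteq> 0" "M \<in> {m. Lco h m \<noteq> 0}" using M ne fh Max_in by auto
  have hle: "\<And>m. Lco h m \<noteq> 0 \<Longrightarrow> m \<le> M" using M fh by simp
  let ?g = "\<lambda>m. Lco h m * Lco v (M + N' - m) * of_int (m - (M + N' - m))"
  have "(\<Sum>m\<in>{m. Lco h m \<noteq> 0}. ?g m) = ?g M + (\<Sum>m\<in>{m. Lco h m \<noteq> 0} - {M}. ?g m)"
    by (rule sum.remove[OF fh hM(2)])
  also have "(\<Sum>m\<in>{m. Lco h m \<noteq> 0} - {M}. ?g m) = 0"
  proof (rule sum.neutral, rule ballI)
    fix m assume "m \<in> {m. Lco h m \<noteq> 0} - {M}"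
    then have "Lco h m \<noteq> 0" "m \<noteq> M" by auto
    then have "m < M" using hle by force
    then show "?g m = 0" using up[of "M + N' - m"] by simp
  qed
  finally have e1: "Lco (sv_bracket h v) (M + N') = ?g M"
    unfolding br_L using G0_empty[OF G] by simp
  have "Lco (sv_bracket h v) (M + N') = 0" using eig up[of "M + N'"] M by simp
  with e1 have "?g M = 0" by simp
  moreover have "M - (M + N' - M) \<noteq> 0" using NN N by simp
  ultimately show False using hM NN unfolding S_def by simp
qed

lemma bot_bound:
  assumes G: "\<forall>r. Gco h r = 0" and fh: "finite {m. Lco h m \<noteq> 0}"
    and ne: "{m. Lco h m \<noteq> 0} \<noteq> {}" and M: "M = Min {m. Lco h m \<noteq> 0}" "M < 0"
    and eig: "sv_bracket h v = sv_scale lam v" and fv: "finite {m. Lco v m \<noteq> 0}" and N: "N < M"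
  shows "Lco v N = 0"
proof (rule ccontr)
  assume vN: "Lco v N \<noteq> 0"
  define S where "S = {m. Lco v m \<noteq> 0}"
  define N' where "N' = Min S"
  have "N \<in> S" using vN by (simp add: S_def)
  moreover have fS: "finite S" using fv by (simp add: S_def)
  ultimately have NN: "N' \<le> N" "N' \<in> S" unfolding N'_def by (metis Min_in Min_le empty_iff)+
  have up: "\<And>j. j < N' \<Longrightarrow> Lco v j = 0"
    using fv unfolding N'_def S_def by (metis (mono_tags) Min_le mem_Collect_eq not_le)
  have hM: "Lco h M \<noteq> 0" "M \<in> {m. Lco h m \<noteq> 0}" using M ne fh Min_in by auto
  have hle: "\<And>m. Lco h m \<noteq> 0 \<Longrightarrow> M \<le> m" using M fh by simp
  let ?g = "\<lambda>m. Lco h m * Lco v (M + N' - m) * of_int (m - (M + N' - m))"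
  have "(\<Sum>m\<in>{m. Lco h m \<noteq> 0}. ?g m) = ?g M + (\<Sum>m\<in>{m. Lco h m \<noteq> 0} - {M}. ?g m)"
    by (rule sum.remove[OF fh hM(2)])
  also have "(\<Sum>m\<in>{m. Lco h m \<noteq> 0} - {M}. ?g m) = 0"
  proof (rule sum.neutral, rule ballI)
    fix m assume "m \<in> {m. Lco h m \<noteq> 0} - {M}"
    then have "Lco h m \<noteq> 0" "m \<noteq> M" by auto
    then have "M < m" using hle by force
    then show "?g m = 0" using up[of "M + N' - m"] by simp
  qed
  finally have e1: "Lco (sv_bracket h v) (M + N') = ?g M"
    unfolding br_L using G0_empty[OF G] by simp
  have "Lco (sv_bracket h v) (M + N') = 0" using eig up[of "M + N'"] M by simp
  with e1 have "?g M = 0" by simp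
  moreover have "M - (M + N' - M) \<noteq> 0" using NN N by simp
  ultimately show False using hM NN unfolding S_def by simp
qed

lemma br_C_pm1:
  assumes G: "\<forall>r. Gco x r = 0" and L: "{m. Lco x m \<noteq> 0} \<subseteq> {s}" and s: "s = 1 \<or> s = -1"
  shows "Cco (sv_bracket x y) = 0"
proof -
  have "Cco (sv_bracket x y) = (\<Sum>m\<in>{m. Lco x m \<noteq> 0}. Lco x m * (Lco y (- m) * of_int (m ^ 3 - m) / 12))"
    unfolding br_C using G0_empty[OF G] by (simp add: mult.assoc)
  also have "\<dots> = 0" using s by (subst sum_supp1[OF L]) auto
  finally show ?thesis .
qed

definition diagk :: "real \<Rightarrow> int \<Rightarrow> (svel \<Rightarrow> svel) \<Rightarrow> bool" where
"diagk eps k f \<longleftrightarrow> (k = 1 \<or> k = -1) \<and>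
  (\<forall>m n. n \<noteq> k*m \<longrightarrow> Lco (f (Lb m)) n = 0) \<and> (\<forall>m t. Gco (f (Lb m)) t = 0) \<and> (\<forall>m. Cco (f (Lb m)) = 0) \<and>
  (\<forall>r. r - eps \<in> \<int> \<longrightarrow> (\<forall>n. Lco (f (Gb r)) n = 0) \<and> (\<forall>t. t \<noteq> of_int k * r \<longrightarrow> Gco (f (Gb r)) t = 0) \<and> Cco (f (Gb r)) = 0) \<and>
  (\<forall>n. Lco (f Cb) n = 0) \<and> (\<forall>t. Gco (f Cb) t = 0)"

lemma Lb_even[simp]: "Lb m \<in> sv_even eps" by (simp add: sv_even_def)
lemma Cb_even[simp]: "Cb \<in> sv_even eps" by (simp add: sv_even_def)
lemma Gb_odd: "r - eps \<in> \<int> \<Longrightarrow> Gb r \<in> sv_odd eps" by (simp add: sv_odd_def)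

lemma aut_inj0: "sv_aut eps \<theta> \<Longrightarrow> x \<in> SVir eps \<Longrightarrow> \<theta> x = Zr \<Longrightarrow> x = Zr"
  unfolding sv_aut_def using lin_Zr[of eps \<theta>] Zr_SVir[of eps]
  by (metis bij_betw_imp_inj_on inj_on_def)

lemma Lb_ne[simp]: "Lb m \<noteq> Zr" by (auto simp: sv_eq_iff)
lemma Gb_ne[simp]: "Gb m \<noteq> Zr" by (auto simp: sv_eq_iff)
lemma Cb_ne[simp]: "Cb \<noteq> Zr" by (auto simp: sv_eq_iff)

lemma aut_diag:
  assumes aut: "sv_aut eps \<theta>"
  shows "\<exists>k. diagk eps k \<theta> \<and> \<theta> (Lb 0) = sv_scale (of_int k) (Lb 0)"
proof -
  have lin: "sv_linear eps \<theta>" and bij: "bij_betw \<theta> (SVir eps) (SVir eps)"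
    and ev: "\<theta> ` sv_even eps \<subseteq> sv_even eps" and od: "\<theta> ` sv_odd eps \<subseteq> sv_odd eps"
    and br: "\<And>x y. x \<in> SVir eps \<Longrightarrow> y \<in> SVir eps \<Longrightarrow> \<theta> (sv_bracket x y) = sv_bracket (\<theta> x) (\<theta> y)"
    using aut unfolding sv_aut_def by auto
  have surj: "\<And>z. z \<in> SVir eps \<Longrightarrow> \<exists>y\<in>SVir eps. z = \<theta> y"
    using bij_betw_imp_surj_on[OF bij] by auto
  have evL: "\<And>m t. Gco (\<theta> (Lb m)) t = 0"
  proof -
    fix m t have "\<theta> (Lb m) \<in> sv_even eps" using ev by (meson Lb_even image_subset_iff)
    then show "Gco (\<theta> (Lb m)) t = 0" by (simp add: sv_even_def)
  qed
  have evC: "\<And>t. Gco (\<theta> Cb) t = 0"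
  proof -
    fix t have "\<theta> Cb \<in> sv_even eps" using ev by (meson Cb_even image_subset_iff)
    then show "Gco (\<theta> Cb) t = 0" by (simp add: sv_even_def)
  qed
  have odG: "\<And>r n. r - eps \<in> \<int> \<Longrightarrow> Lco (\<theta> (Gb r)) n = 0 \<and> Cco (\<theta> (Gb r)) = 0"
  proof -
    fix r n assume "r - eps \<in> \<int>"
    then have "\<theta> (Gb r) \<in> sv_odd eps" using od by (meson Gb_odd image_subset_iff)
    then show "Lco (\<theta> (Gb r)) n = 0 \<and> Cco (\<theta> (Gb r)) = 0" by (simp add: sv_odd_def)
  qed
  define h where "h = \<theta> (Lb 0)"
  have hG: "\<forall>r. Gco h r = 0" using evL by (simp add: h_def)
  have hS: "h \<in> SVir eps" unfolding h_def by (rule lin_SVir[OF lin]) simp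
  have eigL: "\<And>m. sv_bracket h (\<theta> (Lb m)) = sv_scale (- of_int m) (\<theta> (Lb m))"
    unfolding h_def using br[of "Lb 0"] br_L0_Lb lin_scale[OF lin] by (metis Lb_SVir)
  have eigG: "\<And>r. r - eps \<in> \<int> \<Longrightarrow> sv_bracket h (\<theta> (Gb r)) = sv_scale (- complex_of_real r) (\<theta> (Gb r))"
    unfolding h_def using br[of "Lb 0"] br_L0_Gb lin_scale[OF lin] by (metis Lb_SVir Gb_SVir)
  have eigC: "sv_bracket h (\<theta> Cb) = sv_scale 0 (\<theta> Cb)"
    unfolding h_def using br[of "Lb 0"] br_L0_Cb lin_scale[OF lin] by (metis Lb_SVir Cb_SVir)
  have eig: "\<And>b. b \<in> Bas eps \<Longrightarrow> \<exists>lam. sv_bracket h (\<theta> b) = sv_scale lam (\<theta> b)"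
    unfolding Bas_def using eigL eigG eigC by blast
  have fin: "\<And>b. b \<in> Bas eps \<Longrightarrow> finite {m. Lco (\<theta> b) m \<noteq> 0}"
    using Bas_SVir lin_SVir[OF lin] SVirD(1) by blast
  have fh: "finite {m. Lco h m \<noteq> 0}" using SVirD(1)[OF hS] .
  have supp0: "{m. Lco h m \<noteq> 0} \<subseteq> {0}"
  proof (rule ccontr)
    assume "\<not> ?thesis"
    then obtain j where j: "Lco h j \<noteq> 0" "j \<noteq> 0" by auto
    have ne: "{m. Lco h m \<noteq> 0} \<noteq> {}" using j by auto
    define M where "M = Max {m. Lco h m \<noteq> 0}"
    define M' where "M' = Min {m. Lco h m \<noteq> 0}"
    have "j \<le> M" "M' \<le> j" using j fh by (auto simp: M_def M'_def)
    then consider "M > 0" | "M' < 0" using j by linarith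
    then show False
    proof cases
      case 1
      have "\<forall>N>M. Lco (\<theta> y) N = 0" if "y \<in> SVir eps" for y
      proof (rule lin_induct[OF lin that, where P="\<lambda>u. \<forall>N>M. Lco u N = 0"])
        fix b assume b: "b \<in> Bas eps"
        then obtain lam where "sv_bracket h (\<theta> b) = sv_scale lam (\<theta> b)" using eig by blast
        then show "\<forall>N>M. Lco (\<theta> b) N = 0"
          using top_bound[OF hG fh ne M_def 1 _ fin[OF b]] by blast
      qed auto
      moreover obtain y where "y \<in> SVir eps" "Lb (M+1) = \<theta> y" using surj[of "Lb (M+1)"] by auto
      ultimately have "Lco (Lb (M+1)) (M+1) = 0" by simp
      then show False by simp
    next
      case 2
      have "\<forall>N<M'. Lco (\<theta> y) N = 0" if "y \<in> SVir eps" for y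
      proof (rule lin_induct[OF lin that, where P="\<lambda>u. \<forall>N<M'. Lco u N = 0"])
        fix b assume b: "b \<in> Bas eps"
        then obtain lam where "sv_bracket h (\<theta> b) = sv_scale lam (\<theta> b)" using eig by blast
        then show "\<forall>N<M'. Lco (\<theta> b) N = 0"
          using bot_bound[OF hG fh ne M'_def 2 _ fin[OF b]] by blast
      qed auto
      moreover obtain y where "y \<in> SVir eps" "Lb (M'-1) = \<theta> y" using surj[of "Lb (M'-1)"] by auto
      ultimately have "Lco (Lb (M'-1)) (M'-1) = 0" by simp
      then show False by simp
    qed
  qed
  define a where "a = Lco h 0"
  have brh: "\<And>v. sv_bracket h v = ((\<lambda>n. - a * of_int n * Lco v n), (\<lambda>t. - a * complex_of_real t * Gco v t), 0)"
    unfolding a_def by (rule br_diag[OF hG supp0])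
  have eLL: "\<And>m n. - a * of_int n * Lco (\<theta> (Lb m)) n = - of_int m * Lco (\<theta> (Lb m)) n"
    using arg_cong[OF eigL, of "\<lambda>x. Lco x n" for m n] unfolding brh by simp
  have eLC: "\<And>m. 0 = - of_int m * Cco (\<theta> (Lb m))"
    using arg_cong[OF eigL, of "\<lambda>x. Cco x" for m] unfolding brh by simp
  have eGG: "\<And>r t. r - eps \<in> \<int> \<Longrightarrow> - a * complex_of_real t * Gco (\<theta> (Gb r)) t = - complex_of_real r * Gco (\<theta> (Gb r)) t"
    using arg_cong[OF eigG, of _ "\<lambda>x. Gco x t" for t] unfolding brh by simp
  have eCL: "\<And>n. - a * of_int n * Lco (\<theta> Cb) n = 0"
    using arg_cong[OF eigC, of "\<lambda>x. Lco x n" for n] unfolding brh by simp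
  define v1 where "v1 = \<theta> (Lb 1)"
  have v1C: "Cco v1 = 0" using eLC[of 1] by (simp add: v1_def)
  have "v1 \<noteq> Zr" unfolding v1_def using aut_inj0[OF aut, of "Lb 1"] by auto
  then obtain k where k: "Lco v1 k \<noteq> 0" using v1C evL unfolding v1_def by (auto simp: sv_eq_iff)
  have ak: "a * of_int k = 1" using eLL[where m=1 and n=k] k by (simp add: v1_def)
  have k0: "k \<noteq> 0" using ak by auto
  have a0: "a \<noteq> 0" using ak by auto
  have suppL: "\<And>m n. Lco (\<theta> (Lb m)) n \<noteq> 0 \<Longrightarrow> n = k * m"
  proof -
    fix m n assume "Lco (\<theta> (Lb m)) n \<noteq> 0"
    then have e: "a * of_int n = of_int m" using eLL[where m=m and n=n] by simp
    have "(of_int n::complex) = (a * of_int k) * of_int n" using ak by simp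
    also have "\<dots> = of_int k * (a * of_int n)" by (simp add: algebra_simps)
    also have "\<dots> = of_int (k*m)" using e by simp
    finally have "(of_int n :: complex) = of_int (k * m)" .
    then show "n = k * m" using of_int_eq_iff by blast
  qed
  have suppG: "\<And>r t. r - eps \<in> \<int> \<Longrightarrow> Gco (\<theta> (Gb r)) t \<noteq> 0 \<Longrightarrow> t = of_int k * r"
  proof -
    fix r t assume r: "r - eps \<in> \<int>" and "Gco (\<theta> (Gb r)) t \<noteq> 0"
    then have e: "a * complex_of_real t = complex_of_real r" using eGG[OF r, of t] by simp
    have "complex_of_real t = (a * of_int k) * complex_of_real t" using ak by simp
    also have "\<dots> = of_int k * (a * complex_of_real t)" by (simp add: algebra_simps)
    also have "\<dots> = complex_of_real (of_int k * r)" using e by simp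
    finally have "complex_of_real t = complex_of_real (of_int k * r)" .
    then show "t = of_int k * r" using of_real_eq_iff by blast
  qed
  have suppC: "\<And>n. Lco (\<theta> Cb) n \<noteq> 0 \<Longrightarrow> n = 0"
    using eCL a0 by auto
  have kdvd: "\<forall>n. Lco (\<theta> y) n \<noteq> 0 \<longrightarrow> k dvd n" if "y \<in> SVir eps" for y
  proof (rule lin_induct[OF lin that, where P="\<lambda>u. \<forall>n. Lco u n \<noteq> 0 \<longrightarrow> k dvd n"])
    fix b assume b: "b \<in> Bas eps"
    then show "\<forall>n. Lco (\<theta> b) n \<noteq> 0 \<longrightarrow> k dvd n"
      unfolding Bas_def using suppL suppC odG by fastforce
  qed (auto, metis add.left_neutral)
  obtain y where "y \<in> SVir eps" "Lb 1 = \<theta> y" using surj[of "Lb 1"] by auto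
  then have "k dvd 1" using kdvd[of y] by (metis co_simps(10) one_neq_zero)
  then have kpm: "k = 1 \<or> k = -1" by (auto simp: zdvd1_eq)
  have v1k: "Lco v1 n = 0" if "n \<noteq> k" for n using suppL[of 1 n] that by (auto simp: v1_def)
  have Csupp: "{m. Lco (\<theta> Cb) m \<noteq> 0} \<subseteq> {0}" using suppC by auto
  have "sv_bracket (\<theta> Cb) v1 = Zr"
    unfolding v1_def using br[of Cb "Lb 1"] br_Cb lin_Zr[OF lin] by simp
  then have "Lco (sv_bracket (\<theta> Cb) v1) k = 0" by simp
  then have "Lco (\<theta> Cb) 0 = 0" using br_diag[OF _ Csupp, of v1] evC k k0 by simp
  then have CL: "\<And>n. Lco (\<theta> Cb) n = 0" using suppC by blast
  have "sv_bracket v1 (\<theta> (Lb (-1))) = sv_scale 2 h"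
    unfolding v1_def h_def using br[of "Lb 1" "Lb (-1)"] br_L1_Lm1 lin_scale[OF lin] by simp
  moreover have "Cco (sv_bracket v1 (\<theta> (Lb (-1)))) = 0"
    by (rule br_C_pm1[of _ k]) (use evL v1k kpm in \<open>auto simp: v1_def\<close>)
  ultimately have hC: "Cco h = 0" by (metis co_simps(6) mult_eq_0_iff zero_neq_numeral)
  have hform: "h = sv_scale (of_int k) (Lb 0)"
  proof (rule sv_eqI)
    fix n show "Lco h n = Lco (sv_scale (of_int k) (Lb 0)) n"
    proof (cases "n = 0")
      case True
      have "a = of_int k" using ak kpm by (auto simp: minus_equation_iff[of a])
      then show ?thesis using True by (simp add: a_def)
    next
      case False then show ?thesis using supp0 by auto
    qed
  qed (use hG hC in auto)
  have "diagk eps k \<theta>"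
    unfolding diagk_def
  proof (intro conjI allI impI)
    show "k = 1 \<or> k = -1" by (rule kpm)
    show "\<And>m n. n \<noteq> k * m \<Longrightarrow> Lco (\<theta> (Lb m)) n = 0" using suppL by blast
    show "\<And>m t. Gco (\<theta> (Lb m)) t = 0" by (rule evL)
    show "Cco (\<theta> (Lb m)) = 0" for m
      using eLC[of m] hC by (cases "m = 0") (auto simp: h_def)
    show "\<And>r n. r - eps \<in> \<int> \<Longrightarrow> Lco (\<theta> (Gb r)) n = 0" using odG by blast
    show "\<And>r. r - eps \<in> \<int> \<Longrightarrow> Cco (\<theta> (Gb r)) = 0" using odG by blast
    show "\<And>r t. r - eps \<in> \<int> \<Longrightarrow> t \<noteq> of_int k * r \<Longrightarrow> Gco (\<theta> (Gb r)) t = 0" using suppG by blast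
    show "\<And>n. Lco (\<theta> Cb) n = 0" by (rule CL)
    show "\<And>t. Gco (\<theta> Cb) t = 0" by (rule evC)
  qed
  then show ?thesis using hform h_def by auto
qed

lemma sum_ne0_ex: "(\<Sum>x\<in>A. g x) \<noteq> (0::complex) \<Longrightarrow> \<exists>x\<in>A. g x \<noteq> 0"
  by (rule ccontr) simp

lemma br_SVir:
  assumes x: "x \<in> SVir eps" and y: "y \<in> SVir eps"
  shows "sv_bracket x y \<in> SVir eps"
proof (rule SVirI)
  note X = SVirD[OF x] and Y = SVirD[OF y]
  let ?A = "(\<lambda>(m,j). m + j) ` ({m. Lco x m \<noteq> 0} \<times> {m. Lco y m \<noteq> 0})"
  let ?B = "{n::int. of_int n \<in> (\<lambda>(r,s). r + s) ` ({r. Gco x r \<noteq> 0} \<times> {r. Gco y r \<noteq> 0})}"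
  have fA: "finite ?A" using X Y by auto
  have fB: "finite ?B"
    by (rule finite_vimageI[where h="of_int :: int \<Rightarrow> real", simplified vimage_def]) (use X Y in \<open>auto simp: inj_on_def\<close>)
  show "finite {n. Lco (sv_bracket x y) n \<noteq> 0}"
  proof (rule finite_subset[OF _ finite_UnI[OF fA fB]], rule subsetI)
    fix n assume "n \<in> {n. Lco (sv_bracket x y) n \<noteq> 0}"
    then have "(\<Sum>m\<in>{m. Lco x m \<noteq> 0}. Lco x m * Lco y (n - m) * of_int (m - (n - m))) \<noteq> 0
       \<or> (\<Sum>r\<in>{r. Gco x r \<noteq> 0}. 2 * Gco x r * Gco y (of_int n - r)) \<noteq> 0"
      unfolding br_L by auto
    then show "n \<in> ?A \<union> ?B"
    proof
      assume "(\<Sum>m\<in>{m. Lco x m \<noteq> 0}. Lco x m * Lco y (n - m) * of_int (m - (n - m))) \<noteq> 0"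
      then obtain m where "Lco x m \<noteq> 0" "Lco y (n - m) \<noteq> 0" by (auto dest!: sum_ne0_ex)
      then have "(m, n - m) \<in> {m. Lco x m \<noteq> 0} \<times> {m. Lco y m \<noteq> 0}" by auto
      then have "(\<lambda>(m,j). m + j) (m, n - m) \<in> ?A" by (rule imageI)
      then show ?thesis by simp
    next
      assume "(\<Sum>r\<in>{r. Gco x r \<noteq> 0}. 2 * Gco x r * Gco y (of_int n - r)) \<noteq> 0"
      then obtain r where "Gco x r \<noteq> 0" "Gco y (of_int n - r) \<noteq> 0" by (auto dest!: sum_ne0_ex)
      then have "(r, of_int n - r) \<in> {r. Gco x r \<noteq> 0} \<times> {r. Gco y r \<noteq> 0}" by auto
      then have "(\<lambda>(r,s). r + s) (r, of_int n - r) \<in> (\<lambda>(r,s). r + s) ` ({r. Gco x r \<noteq> 0} \<times> {r. Gco y r \<noteq> 0})" by (rule imageI)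
      then show ?thesis by simp
    qed
  qed
  let ?C = "(\<lambda>(m,s). of_int m + s) ` ({m. Lco x m \<noteq> 0} \<times> {r. Gco y r \<noteq> 0})"
  let ?D = "(\<lambda>(m,s). of_int m + s) ` ({m. Lco y m \<noteq> 0} \<times> {r. Gco x r \<noteq> 0})"
  have key: "t \<in> ?C \<union> ?D" if "Gco (sv_bracket x y) t \<noteq> 0" for t
  proof -
    from that have "(\<Sum>m\<in>{m. Lco x m \<noteq> 0}. Lco x m * Gco y (t - of_int m)
                                        * complex_of_real (of_int m / 2 - (t - of_int m))) \<noteq> 0
       \<or> (\<Sum>n\<in>{n. Lco y n \<noteq> 0}. Lco y n * Gco x (t - of_int n)
                                        * complex_of_real (of_int n / 2 - (t - of_int n))) \<noteq> 0"
      unfolding br_G by auto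
    then show ?thesis
    proof
      assume "(\<Sum>m\<in>{m. Lco x m \<noteq> 0}. Lco x m * Gco y (t - of_int m)
                                        * complex_of_real (of_int m / 2 - (t - of_int m))) \<noteq> 0"
      then obtain m where "Lco x m \<noteq> 0" "Gco y (t - of_int m) \<noteq> 0" by (auto dest!: sum_ne0_ex)
      then have "(m, t - of_int m) \<in> {m. Lco x m \<noteq> 0} \<times> {r. Gco y r \<noteq> 0}" by auto
      then have "(\<lambda>(m,s). of_int m + s) (m, t - of_int m) \<in> ?C" by (rule imageI)
      then show ?thesis by simp
    next
      assume "(\<Sum>n\<in>{n. Lco y n \<noteq> 0}. Lco y n * Gco x (t - of_int n)
                                        * complex_of_real (of_int n / 2 - (t - of_int n))) \<noteq> 0"
      then obtain m where "Lco y m \<noteq> 0" "Gco x (t - of_int m) \<noteq> 0" by (auto dest!: sum_ne0_ex)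
      then have "(m, t - of_int m) \<in> {m. Lco y m \<noteq> 0} \<times> {r. Gco x r \<noteq> 0}" by auto
      then have "(\<lambda>(m,s). of_int m + s) (m, t - of_int m) \<in> ?D" by (rule imageI)
      then show ?thesis by simp
    qed
  qed
  show "finite {t. Gco (sv_bracket x y) t \<noteq> 0}"
    by (rule finite_subset[of _ "?C \<union> ?D"]) (use key X Y in auto)
  fix t assume "Gco (sv_bracket x y) t \<noteq> 0"
  then have "t \<in> ?C \<union> ?D" by (rule key)
  then obtain m s where ts: "t = of_int m + s" and "Gco y s \<noteq> 0 \<or> Gco x s \<noteq> 0" by auto
  then have "s - eps \<in> \<int>" using X(3) Y(3) by blast
  then have "of_int m + (s - eps) \<in> \<int>" by (intro Ints_add) auto
  then show "t - eps \<in> \<int>" using ts by (simp add: algebra_simps)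
qed

definition cL :: "int \<Rightarrow> (svel \<Rightarrow> svel) \<Rightarrow> int \<Rightarrow> complex" where "cL k f m = Lco (f (Lb m)) (k*m)"
definition cG :: "int \<Rightarrow> (svel \<Rightarrow> svel) \<Rightarrow> real \<Rightarrow> complex" where "cG k f r = Gco (f (Gb r)) (of_int k * r)"
definition cC :: "(svel \<Rightarrow> svel) \<Rightarrow> complex" where "cC f = Cco (f Cb)"
definition Dg :: "int \<Rightarrow> (svel \<Rightarrow> svel) \<Rightarrow> svel \<Rightarrow> svel" where
  "Dg k f y = ((\<lambda>n. cL k f (k*n) * Lco y (k*n)), (\<lambda>t. cG k f (of_int k*t) * Gco y (of_int k*t)), cC f * Cco y)"

lemma kk: "k = 1 \<or> k = (-1::int) \<Longrightarrow> k * (k * n) = n" by auto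
lemma kkr: "k = 1 \<or> k = (-1::int) \<Longrightarrow> of_int k * (of_int k * t) = (t::real)" by auto

lemma Dg_eq:
  assumes f: "sv_linear eps f" and d: "diagk eps k f" and y: "y \<in> SVir eps"
  shows "f y = Dg k f y"
  using y
proof (rule sv_induct)
  have kpm: "k = 1 \<or> k = -1" using d by (simp add: diagk_def)
  show "f Zr = Dg k f Zr" unfolding lin_Zr[OF f] by (rule sv_eqI) (auto simp: Dg_def)
  fix x b c assume x: "x \<in> SVir eps" and b: "b \<in> Bas eps" and IH: "f x = Dg k f x"
  have e: "f (sv_add (sv_scale c b) x) = sv_add (sv_scale c (f b)) (f x)"
    using f x Bas_SVir[OF b] by (simp add: lin_add lin_scale)
  have fb: "f b = Dg k f b"
  proof -
    consider (L) m where "b = Lb m" | (G) r where "b = Gb r" "r - eps \<in> \<int>" | (C) "b = Cb"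
      using b unfolding Bas_def by auto
    then show ?thesis
    proof cases
      case L
      show ?thesis
      proof (rule sv_eqI)
        fix n show "Lco (f b) n = Lco (Dg k f b) n"
          using d kk[OF kpm, of m] kk[OF kpm, of n] unfolding L Dg_def cL_def diagk_def by auto
      qed (use d L in \<open>auto simp: Dg_def diagk_def\<close>)
    next
      case G
      show ?thesis
      proof (rule sv_eqI)
        fix t show "Gco (f b) t = Gco (Dg k f b) t"
          using d G kkr[OF kpm, of r] kkr[OF kpm, of t] unfolding Dg_def cG_def diagk_def by auto
      qed (use d G in \<open>auto simp: Dg_def diagk_def\<close>)
    next
      case C
      show ?thesis by (rule sv_eqI) (use d C in \<open>auto simp: Dg_def diagk_def cC_def\<close>)
    qed
  qed
  show "f (sv_add (sv_scale c b) x) = Dg k f (sv_add (sv_scale c b) x)"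
    unfolding e IH by (subst fb) (rule sv_eqI, auto simp: Dg_def algebra_simps)
qed

lemma diagk_kpm: "diagk eps k f \<Longrightarrow> k = 1 \<or> k = -1" by (simp add: diagk_def)
lemma dL1: "diagk eps k f \<Longrightarrow> n \<noteq> k*m \<Longrightarrow> Lco (f (Lb m)) n = 0" by (simp add: diagk_def)
lemma dL2: "diagk eps k f \<Longrightarrow> Gco (f (Lb m)) t = 0" by (simp add: diagk_def)
lemma dL3: "diagk eps k f \<Longrightarrow> Cco (f (Lb m)) = 0" by (simp add: diagk_def)
lemma dG1: "diagk eps k f \<Longrightarrow> r - eps \<in> \<int> \<Longrightarrow> Lco (f (Gb r)) n = 0" by (simp add: diagk_def)
lemma dG2: "diagk eps k f \<Longrightarrow> r - eps \<in> \<int> \<Longrightarrow> t \<noteq> of_int k * r \<Longrightarrow> Gco (f (Gb r)) t = 0" by (simp add: diagk_def)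
lemma dG3: "diagk eps k f \<Longrightarrow> r - eps \<in> \<int> \<Longrightarrow> Cco (f (Gb r)) = 0" by (simp add: diagk_def)
lemma dC1: "diagk eps k f \<Longrightarrow> Lco (f Cb) n = 0" by (simp add: diagk_def)
lemma dC2: "diagk eps k f \<Longrightarrow> Gco (f Cb) t = 0" by (simp add: diagk_def)

lemma Bas_cases:
  assumes "b \<in> Bas eps"
  obtains (L) m where "b = Lb m" | (G) r where "b = Gb r" "r - eps \<in> \<int>" | (C) "b = Cb"
  using assms unfolding Bas_def by blast

lemma diagk_Lco0:
  assumes d: "diagk eps k f" and b: "b \<in> Bas eps" "b \<noteq> Lb 0"
  shows "Lco (f b) 0 = 0"
  using b(1)
proof (cases rule: Bas_cases)
  case (L m)
  then have "m \<noteq> 0" using b by auto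
  then have "0 \<noteq> k * m" using diagk_kpm[OF d] by auto
  then show ?thesis using dL1[OF d] L by simp
next
  case (G r) then show ?thesis using dG1[OF d] by simp
next
  case C then show ?thesis using dC1[OF d] by simp
qed

lemma Lb_Bas: "Lb m \<in> Bas eps" by (simp add: Bas_def)
lemma Cb_Bas: "Cb \<in> Bas eps" by (simp add: Bas_def)
lemma Gb_Bas: "r - eps \<in> \<int> \<Longrightarrow> Gb r \<in> Bas eps" by (simp add: Bas_def)

lemma diagk_from:
  assumes kpm: "k = 1 \<or> k = -1" and h: "\<And>b. b \<in> Bas eps \<Longrightarrow> \<exists>\<theta>. diagk eps k \<theta> \<and> f b = \<theta> b"
  shows "diagk eps k f"
proof -
  have L: "(\<forall>n. n \<noteq> k*m \<longrightarrow> Lco (f (Lb m)) n = 0) \<and> (\<forall>t. Gco (f (Lb m)) t = 0) \<and> Cco (f (Lb m)) = 0" for m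
  proof -
    obtain \<theta> where t: "diagk eps k \<theta>" "f (Lb m) = \<theta> (Lb m)" using h[OF Lb_Bas] by blast
    then show ?thesis unfolding diagk_def by simp
  qed
  have G: "(\<forall>n. Lco (f (Gb r)) n = 0) \<and> (\<forall>t. t \<noteq> of_int k * r \<longrightarrow> Gco (f (Gb r)) t = 0) \<and> Cco (f (Gb r)) = 0"
    if r: "r - eps \<in> \<int>" for r
  proof -
    obtain \<theta> where t: "diagk eps k \<theta>" "f (Gb r) = \<theta> (Gb r)" using h[OF Gb_Bas[OF r]] by blast
    then show ?thesis using r unfolding diagk_def by simp
  qed
  have C: "(\<forall>n. Lco (f Cb) n = 0) \<and> (\<forall>t. Gco (f Cb) t = 0)"
  proof -
    obtain \<theta> where t: "diagk eps k \<theta>" "f Cb = \<theta> Cb" using h[OF Cb_Bas] by blast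
    then show ?thesis unfolding diagk_def by simp
  qed
  have c1: "\<forall>m n. n \<noteq> k*m \<longrightarrow> Lco (f (Lb m)) n = 0" using L by blast
  have c2: "\<forall>m t. Gco (f (Lb m)) t = 0" using L by blast
  have c3: "\<forall>m. Cco (f (Lb m)) = 0" using L by blast
  have c4: "\<forall>r. r - eps \<in> \<int> \<longrightarrow> (\<forall>n. Lco (f (Gb r)) n = 0) \<and> (\<forall>t. t \<noteq> of_int k * r \<longrightarrow> Gco (f (Gb r)) t = 0) \<and> Cco (f (Gb r)) = 0"
    using G by blast
  have c5: "\<forall>n. Lco (f Cb) n = 0" using C by blast
  have c6: "\<forall>t. Gco (f Cb) t = 0" using C by blast
  show ?thesis unfolding diagk_def by (intro conjI kpm c1 c2 c3 c4 c5 c6)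
qed

lemma diagk_cL: assumes d: "diagk eps k f" and ne: "f (Lb m) \<noteq> Zr" shows "cL k f m \<noteq> 0"
proof
  assume c: "cL k f m = 0"
  have "f (Lb m) = Zr"
  proof (rule sv_eqI)
    fix n show "Lco (f (Lb m)) n = Lco Zr n"
      using dL1[OF d, of n m] c by (cases "n = k*m") (simp_all add: cL_def)
  qed (simp_all add: dL2[OF d] dL3[OF d])
  with ne show False ..
qed
lemma diagk_cG: assumes d: "diagk eps k f" and r: "r - eps \<in> \<int>" and ne: "f (Gb r) \<noteq> Zr" shows "cG k f r \<noteq> 0"
proof
  assume c: "cG k f r = 0"
  have "f (Gb r) = Zr"
  proof (rule sv_eqI)
    fix t show "Gco (f (Gb r)) t = Gco Zr t"
      using dG2[OF d r, of t] c by (cases "t = of_int k * r") (simp_all add: cG_def)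
  qed (simp_all add: dG1[OF d r] dG3[OF d r])
  with ne show False ..
qed
lemma diagk_cC: assumes d: "diagk eps k f" and ne: "f Cb \<noteq> Zr" shows "cC f \<noteq> 0"
proof
  assume c: "cC f = 0"
  have "f Cb = Zr" by (rule sv_eqI) (use c in \<open>simp_all add: dC1[OF d] dC2[OF d] cC_def\<close>)
  with ne show False ..
qed

lemma aut_ne: assumes "sv_aut eps \<theta>" "b \<in> Bas eps" shows "\<theta> b \<noteq> Zr"
proof
  assume "\<theta> b = Zr"
  then have "b = Zr" using aut_inj0[OF assms(1) Bas_SVir[OF assms(2)]] by simp
  from assms(2) this show False by (cases rule: Bas_cases) simp_all
qed

lemma loc_basis:
  assumes loc: "sv_local_aut eps \<phi>" and k0: "\<phi> (Lb 0) = sv_scale (of_int k0) (Lb 0)"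
    and b: "b \<in> Bas eps"
  shows "\<exists>\<theta>. sv_aut eps \<theta> \<and> diagk eps k0 \<theta> \<and> \<phi> b = \<theta> b"
proof -
  have lin: "sv_linear eps \<phi>" and lc: "\<And>x. x \<in> SVir eps \<Longrightarrow> \<exists>\<theta>. sv_aut eps \<theta> \<and> \<phi> x = \<theta> x"
    using loc unfolding sv_local_aut_def by auto
  show ?thesis
  proof (cases "b = Lb 0")
    case True
    obtain \<theta> where t: "sv_aut eps \<theta>" "\<phi> (Lb 0) = \<theta> (Lb 0)" using lc[of "Lb 0"] by auto
    obtain k where "diagk eps k \<theta>" "\<theta> (Lb 0) = sv_scale (of_int k) (Lb 0)" using aut_diag[OF t(1)] by auto
    moreover have "k = k0"
      using arg_cong[OF k0, of "\<lambda>x. Lco x 0"] t(2) calculation(2) by simp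
    ultimately show ?thesis using t True by (intro exI[of _ \<theta>]) simp
  next
    case False
    have bS: "b \<in> SVir eps" using Bas_SVir[OF b] .
    obtain \<theta>b where tb: "sv_aut eps \<theta>b" "\<phi> b = \<theta>b b" using lc[OF bS] by auto
    obtain kb where "diagk eps kb \<theta>b" using aut_diag[OF tb(1)] by auto
    then have pb0: "Lco (\<phi> b) 0 = 0" using diagk_Lco0[OF _ b False] tb(2) by simp
    obtain \<theta> where t: "sv_aut eps \<theta>" "\<phi> (sv_add (Lb 0) b) = \<theta> (sv_add (Lb 0) b)"
      using lc[of "sv_add (Lb 0) b"] bS by auto
    obtain k where d: "diagk eps k \<theta>" "\<theta> (Lb 0) = sv_scale (of_int k) (Lb 0)" using aut_diag[OF t(1)] by auto
    have t0: "Lco (\<theta> b) 0 = 0" using diagk_Lco0[OF d(1) b False] .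
    have lin\<theta>: "sv_linear eps \<theta>" using t(1) by (simp add: sv_aut_def)
    have e1: "\<phi> (sv_add (Lb 0) b) = sv_add (sv_scale (of_int k0) (Lb 0)) (\<phi> b)"
      unfolding lin_add[OF lin Lb_SVir bS] k0 ..
    have e2: "\<theta> (sv_add (Lb 0) b) = sv_add (sv_scale (of_int k) (Lb 0)) (\<theta> b)"
      unfolding lin_add[OF lin\<theta> Lb_SVir bS] d(2) ..
    from t(2) have e: "sv_add (sv_scale (of_int k0) (Lb 0)) (\<phi> b) = sv_add (sv_scale (of_int k) (Lb 0)) (\<theta> b)"
      unfolding e1 e2 .
    have "Lco (sv_add (sv_scale (of_int k0) (Lb 0)) (\<phi> b)) 0 = Lco (sv_add (sv_scale (of_int k) (Lb 0)) (\<theta> b)) 0"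
      by (rule arg_cong[OF e])
    then have "(of_int k0 :: complex) = of_int k" using pb0 t0 by simp
    then have kk0: "k = k0" by simp
    have "\<phi> b = \<theta> b"
    proof (rule sv_eqI)
      fix m show "Lco (\<phi> b) m = Lco (\<theta> b) m" using arg_cong[OF e, of "\<lambda>x. Lco x m"] kk0 by simp
    next
      fix r show "Gco (\<phi> b) r = Gco (\<theta> b) r" using arg_cong[OF e, of "\<lambda>x. Gco x r"] kk0 by simp
    next
      show "Cco (\<phi> b) = Cco (\<theta> b)" using arg_cong[OF e, of "\<lambda>x. Cco x"] kk0 by simp
    qed
    then show ?thesis using t(1) d(1) kk0 by (intro exI[of _ \<theta>]) simp
  qed
qed

lemma eps_refl:
  fixes eps s :: real
  assumes e: "eps \<in> {0, 1/2}" and k: "k = 1 \<or> k = (-1::int)" and s: "s - eps \<in> \<int>"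
  shows "of_int k * s - eps \<in> \<int>"
proof (cases "k = 1")
  case True then show ?thesis using s by simp
next
  case False
  then have k1: "k = -1" using k by simp
  have "2 * eps = 0 \<or> 2 * eps = 1" using e by auto
  then have "2 * eps \<in> \<int>" by (metis Ints_0 Ints_1)
  then have "- (s - eps) - 2 * eps \<in> \<int>" by (rule Ints_diff[OF Ints_minus[OF s]])
  moreover have "- (s - eps) - 2 * eps = - s - eps" by simp
  ultimately have "- s - eps \<in> \<int>" by metis
  then show ?thesis using k1 by simp
qed

lemma agree:
  assumes loc: "sv_local_aut eps \<phi>" and d: "diagk eps k0 \<phi>"
    and k0: "\<phi> (Lb 0) = sv_scale (of_int k0) (Lb 0)"
    and x: "x \<in> SVir eps" and y: "y \<in> SVir eps" and w: "w \<in> SVir eps"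
  shows "\<exists>\<theta>. sv_aut eps \<theta> \<and> \<phi> x = \<theta> x \<and> \<phi> y = \<theta> y \<and> \<phi> w = \<theta> w"
proof -
  have lin: "sv_linear eps \<phi>" and lc: "\<And>x. x \<in> SVir eps \<Longrightarrow> \<exists>\<theta>. sv_aut eps \<theta> \<and> \<phi> x = \<theta> x"
    using loc unfolding sv_local_aut_def by auto
  have kpm: "k0 = 1 \<or> k0 = -1" using diagk_kpm[OF d] .
  note X = SVirD[OF x] and Y = SVirD[OF y] and W = SVirD[OF w]
  define SL where "SL = {m. Lco x m \<noteq> 0} \<union> {m. Lco y m \<noteq> 0} \<union> {m. Lco w m \<noteq> 0} \<union> {0}"
  define SG where "SG = {m. Gco x m \<noteq> 0} \<union> {m. Gco y m \<noteq> 0} \<union> {m. Gco w m \<noteq> 0}"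
  define z :: svel where "z = ((\<lambda>n. if n \<in> SL then 1 else 0), (\<lambda>t. if t \<in> SG then 1 else 0), 1)"
  have fSL: "finite SL" using X Y W by (simp add: SL_def)
  have fSG: "finite SG" using X Y W by (simp add: SG_def)
  have zS: "z \<in> SVir eps"
  proof (rule SVirI)
    have "{m. Lco z m \<noteq> 0} = SL" by (auto simp: z_def)
    then show "finite {m. Lco z m \<noteq> 0}" using fSL by simp
    have "{m. Gco z m \<noteq> 0} = SG" by (auto simp: z_def)
    then show "finite {m. Gco z m \<noteq> 0}" using fSG by simp
    fix r assume "Gco z r \<noteq> 0"
    then have "r \<in> SG" by (auto simp: z_def split: if_splits)
    then show "r - eps \<in> \<int>" using X(3) Y(3) W(3) unfolding SG_def by blast
  qed
  obtain \<theta> where t: "sv_aut eps \<theta>" "\<phi> z = \<theta> z" using lc[OF zS] by blast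
  obtain k where dt: "diagk eps k \<theta>" "\<theta> (Lb 0) = sv_scale (of_int k) (Lb 0)" using aut_diag[OF t(1)] by blast
  have lint: "sv_linear eps \<theta>" using t(1) by (simp add: sv_aut_def)
  have zz: "Dg k0 \<phi> z = Dg k \<theta> z" using t(2) Dg_eq[OF lin d zS] Dg_eq[OF lint dt(1) zS] by simp
  have "Lco (Dg k0 \<phi> z) 0 = Lco (Dg k \<theta> z) 0" using zz by simp
  then have "(of_int k0 :: complex) = of_int k" using k0 dt(2) by (simp add: Dg_def cL_def z_def SL_def)
  then have kk0: "k = k0" by simp
  have cLe: "cL k0 \<phi> m = cL k0 \<theta> m" if "m \<in> SL" for m
  proof -
    have "Lco (Dg k0 \<phi> z) (k0 * m) = Lco (Dg k \<theta> z) (k0 * m)" using zz by simp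
    then show ?thesis using that kk[OF kpm, of m] kk0 by (simp add: Dg_def z_def)
  qed
  have cGe: "cG k0 \<phi> r = cG k0 \<theta> r" if "r \<in> SG" for r
  proof -
    have "Gco (Dg k0 \<phi> z) (of_int k0 * r) = Gco (Dg k \<theta> z) (of_int k0 * r)" using zz by simp
    then show ?thesis using that kkr[OF kpm, of r] kk0 by (simp add: Dg_def z_def)
  qed
  have cCe: "cC \<phi> = cC \<theta>"
  proof -
    have "Cco (Dg k0 \<phi> z) = Cco (Dg k \<theta> z)" using zz by simp
    then show ?thesis by (simp add: Dg_def z_def)
  qed
  have gen: "\<phi> u = \<theta> u" if u: "u \<in> SVir eps" and uL: "{m. Lco u m \<noteq> 0} \<subseteq> SL"
    and uG: "{m. Gco u m \<noteq> 0} \<subseteq> SG" for u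
  proof -
    have "Dg k0 \<phi> u = Dg k0 \<theta> u"
    proof (rule sv_eqI)
      fix n show "Lco (Dg k0 \<phi> u) n = Lco (Dg k0 \<theta> u) n"
        using cLe[of "k0 * n"] uL by (cases "Lco u (k0 * n) = 0") (auto simp: Dg_def)
    next
      fix t show "Gco (Dg k0 \<phi> u) t = Gco (Dg k0 \<theta> u) t"
        using cGe[of "of_int k0 * t"] uG by (cases "Gco u (of_int k0 * t) = 0") (auto simp: Dg_def)
    next
      show "Cco (Dg k0 \<phi> u) = Cco (Dg k0 \<theta> u)" using cCe by (simp add: Dg_def)
    qed
    then show ?thesis using Dg_eq[OF lin d u] Dg_eq[OF lint _ u, of k0] dt(1) kk0 by simp
  qed
  have "\<phi> x = \<theta> x" by (rule gen[OF x]) (auto simp: SL_def SG_def)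
  moreover have "\<phi> y = \<theta> y" by (rule gen[OF y]) (auto simp: SL_def SG_def)
  moreover have "\<phi> w = \<theta> w" by (rule gen[OF w]) (auto simp: SL_def SG_def)
  ultimately show ?thesis using t(1) by blast
qed

theorem theorem5p3:
  fixes eps :: real and \<phi> :: "svel \<Rightarrow> svel"
  assumes "eps \<in> {0, 1/2}"
    and "sv_local_aut eps \<phi>"
  shows "sv_aut eps \<phi>"
proof -
  note e = assms(1) and loc = assms(2)
  have lin: "sv_linear eps \<phi>" and lc: "\<And>x. x \<in> SVir eps \<Longrightarrow> \<exists>\<theta>. sv_aut eps \<theta> \<and> \<phi> x = \<theta> x"
    using loc unfolding sv_local_aut_def by auto
  obtain \<theta>0 where t0: "sv_aut eps \<theta>0" "\<phi> (Lb 0) = \<theta>0 (Lb 0)" using lc[of "Lb 0"] by auto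
  obtain k0 where d0: "diagk eps k0 \<theta>0" "\<theta>0 (Lb 0) = sv_scale (of_int k0) (Lb 0)"
    using aut_diag[OF t0(1)] by blast
  have k0: "\<phi> (Lb 0) = sv_scale (of_int k0) (Lb 0)" using t0 d0 by simp
  have kpm: "k0 = 1 \<or> k0 = -1" using diagk_kpm[OF d0(1)] .
  have BAS: "\<And>b. b \<in> Bas eps \<Longrightarrow> \<exists>\<theta>. sv_aut eps \<theta> \<and> diagk eps k0 \<theta> \<and> \<phi> b = \<theta> b"
    by (rule loc_basis[OF loc k0])
  have d: "diagk eps k0 \<phi>"
    by (rule diagk_from[OF kpm]) (use BAS in blast)
  have nzb: "\<phi> b \<noteq> Zr" if "b \<in> Bas eps" for b
    using BAS[OF that] aut_ne[OF _ that] by metis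
  have nzL: "cL k0 \<phi> m \<noteq> 0" for m by (rule diagk_cL[OF d nzb[OF Lb_Bas]])
  have nzG: "cG k0 \<phi> r \<noteq> 0" if "r - eps \<in> \<int>" for r by (rule diagk_cG[OF d that nzb[OF Gb_Bas[OF that]]])
  have nzC: "cC \<phi> \<noteq> 0" by (rule diagk_cC[OF d nzb[OF Cb_Bas]])
  have inj: "inj_on \<phi> (SVir eps)"
  proof (rule inj_onI)
    fix x y assume x: "x \<in> SVir eps" and y: "y \<in> SVir eps" and xy: "\<phi> x = \<phi> y"
    define dd where "dd = sv_add x (sv_scale (-1) y)"
    have dS: "dd \<in> SVir eps" using x y by (simp add: dd_def)
    have "\<phi> dd = sv_add (\<phi> x) (sv_scale (-1) (\<phi> y))"
      unfolding dd_def using lin x y by (simp add: lin_add lin_scale)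
    also have "\<dots> = Zr" using xy by (intro sv_eqI) simp_all
    finally have pd: "\<phi> dd = Zr" .
    obtain \<theta> where "sv_aut eps \<theta>" "\<phi> dd = \<theta> dd" using lc[OF dS] by blast
    then have "dd = Zr" using aut_inj0 dS pd by metis
    then show "x = y"
      unfolding dd_def by (intro sv_eqI) (simp_all add: sv_eq_iff)
  qed
  have surj: "\<phi> ` SVir eps = SVir eps"
  proof
    show "\<phi> ` SVir eps \<subseteq> SVir eps" using lin_SVir[OF lin] by blast
    show "SVir eps \<subseteq> \<phi> ` SVir eps"
    proof
      fix y assume y: "y \<in> SVir eps"
      note Y = SVirD[OF y]
      define x :: svel where "x = ((\<lambda>m. Lco y (k0*m) / cL k0 \<phi> m), (\<lambda>r. Gco y (of_int k0 * r) / cG k0 \<phi> r), Cco y / cC \<phi>)"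
      have xS: "x \<in> SVir eps"
      proof (rule SVirI)
        have "{m. Lco x m \<noteq> 0} \<subseteq> (\<lambda>n. k0 * n) ` {m. Lco y m \<noteq> 0}"
        proof
          fix m assume "m \<in> {m. Lco x m \<noteq> 0}"
          then have "Lco y (k0 * m) \<noteq> 0" by (auto simp: x_def)
          moreover have "m = k0 * (k0 * m)" using kk[OF kpm] by simp
          ultimately show "m \<in> (\<lambda>n. k0 * n) ` {m. Lco y m \<noteq> 0}" by blast
        qed
        then show "finite {m. Lco x m \<noteq> 0}" using Y(1) by (metis finite_imageI finite_subset)
        have "{m. Gco x m \<noteq> 0} \<subseteq> (\<lambda>n. of_int k0 * n) ` {m. Gco y m \<noteq> 0}"
        proof
          fix m assume "m \<in> {m. Gco x m \<noteq> 0}"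
          then have "Gco y (of_int k0 * m) \<noteq> 0" by (auto simp: x_def)
          moreover have "m = of_int k0 * (of_int k0 * m)" using kkr[OF kpm] by simp
          ultimately show "m \<in> (\<lambda>n. of_int k0 * n) ` {m. Gco y m \<noteq> 0}" by blast
        qed
        then show "finite {m. Gco x m \<noteq> 0}" using Y(2) by (metis finite_imageI finite_subset)
        fix r assume "Gco x r \<noteq> 0"
        then have "Gco y (of_int k0 * r) \<noteq> 0" by (auto simp: x_def)
        then have "of_int k0 * r - eps \<in> \<int>" by (rule Y(3))
        then have "of_int k0 * (of_int k0 * r) - eps \<in> \<int>" by (rule eps_refl[OF e kpm])
        then show "r - eps \<in> \<int>" using kkr[OF kpm] by simp
      qed
      have "\<phi> x = y"
      proof -
        have "Dg k0 \<phi> x = y"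
        proof (rule sv_eqI)
          fix n show "Lco (Dg k0 \<phi> x) n = Lco y n"
            using nzL[of "k0 * n"] by (simp add: Dg_def x_def kk[OF kpm])
        next
          fix t show "Gco (Dg k0 \<phi> x) t = Gco y t"
          proof (cases "Gco y t = 0")
            case True then show ?thesis by (simp add: Dg_def x_def kkr[OF kpm])
          next
            case False
            then have "t - eps \<in> \<int>" by (rule Y(3))
            then have "of_int k0 * t - eps \<in> \<int>" by (rule eps_refl[OF e kpm])
            then have "cG k0 \<phi> (of_int k0 * t) \<noteq> 0" by (rule nzG)
            then show ?thesis by (simp add: Dg_def x_def kkr[OF kpm])
          qed
        next
          show "Cco (Dg k0 \<phi> x) = Cco y" using nzC by (simp add: Dg_def x_def)
        qed
        then show ?thesis using Dg_eq[OF lin d xS] by simp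
      qed
      then show "y \<in> \<phi> ` SVir eps" using xS by blast
    qed
  qed
  have ev: "\<phi> ` sv_even eps \<subseteq> sv_even eps"
  proof
    fix z assume "z \<in> \<phi> ` sv_even eps"
    then obtain x where x: "x \<in> sv_even eps" "z = \<phi> x" by blast
    then have "x \<in> SVir eps" by (simp add: sv_even_def)
    then obtain \<theta> where "sv_aut eps \<theta>" "\<phi> x = \<theta> x" using lc by blast
    then show "z \<in> sv_even eps" using x unfolding sv_aut_def by blast
  qed
  have od: "\<phi> ` sv_odd eps \<subseteq> sv_odd eps"
  proof
    fix z assume "z \<in> \<phi> ` sv_odd eps"
    then obtain x where x: "x \<in> sv_odd eps" "z = \<phi> x" by blast
    then have "x \<in> SVir eps" by (simp add: sv_odd_def)
    then obtain \<theta> where "sv_aut eps \<theta>" "\<phi> x = \<theta> x" using lc by blast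
    then show "z \<in> sv_odd eps" using x unfolding sv_aut_def by blast
  qed
  have br: "\<phi> (sv_bracket x y) = sv_bracket (\<phi> x) (\<phi> y)" if x: "x \<in> SVir eps" and y: "y \<in> SVir eps" for x y
  proof -
    have w: "sv_bracket x y \<in> SVir eps" by (rule br_SVir[OF x y])
    obtain \<theta> where t: "sv_aut eps \<theta>" "\<phi> x = \<theta> x" "\<phi> y = \<theta> y" "\<phi> (sv_bracket x y) = \<theta> (sv_bracket x y)"
      using agree[OF loc d k0 x y w] by blast
    then show ?thesis using x y unfolding sv_aut_def by simp
  qed
  show ?thesis unfolding sv_aut_def bij_betw_def using lin inj surj ev od br by blast
qed

end
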